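(* Fix $N\ge 3$ and $\lambda>0$, and regard the quantity $F(1)$ defined by the recursion in the context as a function of $p\in[0,1)$. Then, as $p\downarrow 0$, $$F(1)=F_0(1)-\lambda^{-1}H_{N-1}\,p+o(p),$$ where $F_0(1)=\sum_{i=1}^{N-1}\frac{1}{\lambda i(N-i)}=\frac{2}{\lambda N}H_{N-1}$ and $H_n=\sum_{k=1}^n1/k$.
   Context: For $N\ge3$, $\lambda>0$, $p\in[0,1)$, define $F^{(a)}(i)$ for $2\le i\le N-1$, $1\le a\le i-1$ by $F^{(a)}(N-1)=\frac{(1-p)^a}{\lambda(N-1)}$ and, for $2\le i\le N-2$, $F^{(a)}(i)=(1-p)^{a(N-i)}\big(\frac{1}{\lambda i(N-i)}+F^{(1)}(i+1)\big)+\sum_{c=1}^{N-i-1}\binom{N-i}{c}[1-(1-p)^a]^c(1-p)^{a(N-i-c)}F^{(c)}(i+c)$, and set $F(1)=(1-p)^{N-1}\big(\frac{1}{\lambda(N-1)}+F^{(1)}(2)\big)+\sum_{c=1}^{N-2}\binom{N-1}{c}p^c(1-p)^{N-1-c}F^{(c)}(1+c)$. (By the paper's Theorem 1, $F(1)$ is the expected flooding time in an $N$-node network whose edges alternate between ON periods of mean $\mu^{-1}$ and exponential OFF periods of mean $\lambda^{-1}$, with stationary ON probability $p=\lambda/(\lambda+\mu)$ and instantaneous message transmission over ON edges; $F_0(1)$ is its value at $p=0$.) *)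

theory Defs
  imports "HOL-Analysis.Analysis" "HOL-Library.Landau_Symbols"
begin

text \<open>Fa N lam p a i is F^{(a)}(i). The branch i >= N-1 is the base case
  F^{(a)}(N-1) = (1-p)^a / (lam (N-1)); only i = N-1 is used there.\<close>
function Fa :: "nat \<Rightarrow> real \<Rightarrow> real \<Rightarrow> nat \<Rightarrow> nat \<Rightarrow> real" where
  "Fa N lam p a i =
    (if N - 1 \<le> i then (1 - p) ^ a / (lam * real (N - 1))
     else (1 - p) ^ (a * (N - i)) * (1 / (lam * real i * real (N - i)) + Fa N lam p 1 (i + 1))
        + (\<Sum>c = 1..N - i - 1. real ((N - i) choose c) * (1 - (1 - p) ^ a) ^ c
             * (1 - p) ^ (a * (N - i - c)) * Fa N lam p c (i + c)))"
  by pat_completeness auto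
termination
  by (relation "Wellfounded.measure (\<lambda>(N, lam, p, a, i). N - i)") auto

definition F1 :: "nat \<Rightarrow> real \<Rightarrow> real \<Rightarrow> real" where
  "F1 N lam p =
     (1 - p) ^ (N - 1) * (1 / (lam * real (N - 1)) + Fa N lam p 1 2)
     + (\<Sum>c = 1..N - 2. real ((N - 1) choose c) * p ^ c * (1 - p) ^ (N - 1 - c) * Fa N lam p c (1 + c))"

end

theory Submission
  imports Defs
begin

declare Fa.simps[simp del]

lemma Fa_base: "N - 1 \<le> i \<Longrightarrow> Fa N lam p a i = (1 - p) ^ a / (lam * real (N - 1))"
  by (subst Fa.simps) simp

lemma Fa_step: "i < N - 1 \<Longrightarrow> Fa N lam p a i =
   (1 - p) ^ (a * (N - i)) * (1 / (lam * real i * real (N - i)) + Fa N lam p 1 (i + 1))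
        + (\<Sum>c = 1..N - i - 1. real ((N - i) choose c) * (1 - (1 - p) ^ a) ^ c
             * (1 - p) ^ (a * (N - i - c)) * Fa N lam p c (i + c))"
  by (subst Fa.simps) simp

lemma D_omp: "DERIV (\<lambda>p::real. (1 - p) ^ k) 0 :> - real k"
proof -
  have "DERIV (\<lambda>p::real. 1 - p) 0 :> -1"
    using DERIV_diff[OF DERIV_const DERIV_ident, of 1 0 UNIV] by simp
  from DERIV_power[OF this, of k] show ?thesis by simp
qed

lemma D_powc: assumes "DERIV g 0 :> d" "g 0 = 0" "c \<ge> 1"
  shows "DERIV (\<lambda>p::real. g p ^ c) 0 :> (if c = 1 then d else 0)"
proof -
  from DERIV_power[OF assms(1), of c] have "DERIV (\<lambda>p::real. g p ^ c) 0 :> of_nat c * (d * g 0 ^ (c - Suc 0))" .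
  moreover have "of_nat c * (d * g 0 ^ (c - Suc 0)) = (if c = 1 then d else 0)"
    using assms(2,3) by auto
  ultimately show ?thesis by simp
qed

lemma D_A: "DERIV (\<lambda>p::real. 1 - (1 - p) ^ a) 0 :> real a"
  using DERIV_diff[OF DERIV_const D_omp, of 1 a] by simp

definition S :: "nat \<Rightarrow> real \<Rightarrow> nat \<Rightarrow> real" where
  "S N lam i = (\<Sum>j = i..N - 1. 1 / (lam * real j * real (N - j)))"
definition T :: "nat \<Rightarrow> real \<Rightarrow> nat \<Rightarrow> real" where
  "T N lam i = (\<Sum>j = i..N - 1. 1 / (lam * real j))"

lemma S_split: "i \<le> N - 1 \<Longrightarrow> S N lam i = 1 / (lam * real i * real (N - i)) + S N lam (i + 1)"
  unfolding S_def by (simp add: sum.atLeast_Suc_atMost)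

lemma T_split: "i \<le> N - 1 \<Longrightarrow> T N lam i = 1 / (lam * real i) + T N lam (i + 1)"
  unfolding T_def by (simp add: sum.atLeast_Suc_atMost)

lemma main:
  assumes N: "N \<ge> 2" and lam: "lam > 0"
  shows "i \<le> N - 1 \<Longrightarrow> Fa N lam 0 a i = S N lam i
     \<and> DERIV (\<lambda>p. Fa N lam p a i) 0 :> (- real a / (lam * real i) - T N lam (i + 1))"
proof (induction "N - 1 - i" arbitrary: i a rule: less_induct)
  case (less i a)
  show ?case
  proof (cases "i = N - 1")
    case True
    have f: "(\<lambda>p. Fa N lam p a i) = (\<lambda>p. (1 - p) ^ a / (lam * real (N - 1)))"
      using True by (intro ext Fa_base) simp
    have v: "Fa N lam 0 a i = S N lam i"
      using True N by (simp add: Fa_base S_def)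
    have T0: "T N lam (i + 1) = 0" using True N by (simp add: T_def)
    have "DERIV (\<lambda>p. (1 - p) ^ a / (lam * real (N - 1))) 0 :> - real a / (lam * real (N - 1))"
      using DERIV_cdivide[OF D_omp, of a "lam * real (N - 1)"] by simp
    then show ?thesis using v f T0 True by simp
  next
    case False
    then have lt: "i < N - 1" using less.prems by simp
    have IH: "\<And>j b. i < j \<Longrightarrow> j \<le> N - 1 \<Longrightarrow> Fa N lam 0 b j = S N lam j
     \<and> DERIV (\<lambda>p. Fa N lam p b j) 0 :> (- real b / (lam * real j) - T N lam (j + 1))"
    proof -
      fix j b assume h: "i < j" "j \<le> N - 1"
      then have "N - 1 - j < N - 1 - i" by arith
      then show "Fa N lam 0 b j = S N lam j
     \<and> DERIV (\<lambda>p. Fa N lam p b j) 0 :> (- real b / (lam * real j) - T N lam (j + 1))"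
        using less.hyps h(2) by blast
    qed
    define m where "m = N - i"
    have m2: "m \<ge> 2" using lt m_def by simp
    have f: "(\<lambda>p. Fa N lam p a i) = (\<lambda>p. (1 - p) ^ (a * (N - i)) * (1 / (lam * real i * real (N - i)) + Fa N lam p 1 (i + 1))
        + (\<Sum>c = 1..N - i - 1. real ((N - i) choose c) * (1 - (1 - p) ^ a) ^ c
             * (1 - p) ^ (a * (N - i - c)) * Fa N lam p c (i + c)))"
      using lt by (intro ext Fa_step) simp
    have v1: "Fa N lam 0 1 (i + 1) = S N lam (i + 1)" using IH[of "i+1" 1] lt by simp
    have v: "Fa N lam 0 a i = S N lam i"
      using lt v1 S_split[of i N lam] apply (simp add: Fa_step)
      by (rule sum.neutral) auto
    have d1: "DERIV (\<lambda>p. Fa N lam p 1 (i + 1)) 0 :> (- 1 / (lam * real (i + 1)) - T N lam (i + 2))"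
      using IH[of "i+1" 1] lt by simp
    have dfirst: "DERIV (\<lambda>p. (1 - p) ^ (a * (N - i)) * (1 / (lam * real i * real (N - i)) + Fa N lam p 1 (i + 1))) 0
       :> (- real (a * (N - i)) * (1 / (lam * real i * real (N - i)) + S N lam (i + 1))
           + (- 1 / (lam * real (i + 1)) - T N lam (i + 2)))"
      using DERIV_mult[OF D_omp DERIV_add[OF DERIV_const d1], of "a * (N - i)" "1 / (lam * real i * real (N - i))"] v1
      by simp
    have dc: "DERIV (\<lambda>p. real ((N - i) choose c) * (1 - (1 - p) ^ a) ^ c
             * (1 - p) ^ (a * (N - i - c)) * Fa N lam p c (i + c)) 0 :>
             (if c = 1 then real (N - i) * real a * S N lam (i + 1) else 0)"
      if c: "c \<in> {1..N - i - 1}" for c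
    proof -
      have ic: "i < i + c" "i + c \<le> N - 1" using c by auto
      obtain D where dF: "DERIV (\<lambda>p. Fa N lam p c (i + c)) 0 :> D" using IH[OF ic] by blast
      have vF: "Fa N lam 0 c (i + c) = S N lam (i + c)" using IH[OF ic] by blast
      have dA: "DERIV (\<lambda>p::real. (1 - (1 - p) ^ a) ^ c) 0 :> (if c = 1 then real a else 0)"
        by (rule D_powc[OF D_A]) (use c in auto)
      have "DERIV (\<lambda>p. real ((N - i) choose c) * (1 - (1 - p) ^ a) ^ c
             * (1 - p) ^ (a * (N - i - c)) * Fa N lam p c (i + c)) 0 :>
            (real ((N - i) choose c) * (if c = 1 then real a else 0) * (1 - 0) ^ (a * (N - i - c))
              + - real (a * (N - i - c)) * (real ((N - i) choose c) * (1 - (1 - 0) ^ a) ^ c)) * Fa N lam 0 c (i + c)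
             + D * (real ((N - i) choose c) * (1 - (1 - 0) ^ a) ^ c * (1 - 0) ^ (a * (N - i - c)))"
        by (intro DERIV_mult DERIV_cmult dA D_omp dF)
      moreover have "(real ((N - i) choose c) * (if c = 1 then real a else 0) * (1 - 0) ^ (a * (N - i - c))
              + - real (a * (N - i - c)) * (real ((N - i) choose c) * (1 - (1 - 0) ^ a) ^ c)) * Fa N lam 0 c (i + c)
             + D * (real ((N - i) choose c) * (1 - (1 - 0) ^ a) ^ c * (1 - 0) ^ (a * (N - i - c)))
           = (if c = 1 then real (N - i) * real a * S N lam (i + 1) else 0)"
        using c vF by auto
      ultimately show ?thesis by simp
    qed
    have dsum: "DERIV (\<lambda>p. \<Sum>c = 1..N - i - 1. real ((N - i) choose c) * (1 - (1 - p) ^ a) ^ c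
             * (1 - p) ^ (a * (N - i - c)) * Fa N lam p c (i + c)) 0 :>
          (\<Sum>c = 1..N - i - 1. (if c = 1 then real (N - i) * real a * S N lam (i + 1) else 0))"
      by (rule DERIV_sum) (rule dc)
    have sv: "(\<Sum>c = 1..N - i - 1. (if c = 1 then real (N - i) * real a * S N lam (i + 1) else 0))
        = real (N - i) * real a * S N lam (i + 1)"
      using lt by (simp add: sum.delta) arith
    have "DERIV (\<lambda>p. Fa N lam p a i) 0 :>
       (- real (a * (N - i)) * (1 / (lam * real i * real (N - i)) + S N lam (i + 1))
           + (- 1 / (lam * real (i + 1)) - T N lam (i + 2)) + real (N - i) * real a * S N lam (i + 1))"
      unfolding f using DERIV_add[OF dfirst dsum] sv by simp
    moreover have "- real (a * (N - i)) * (1 / (lam * real i * real (N - i)) + S N lam (i + 1))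
           + (- 1 / (lam * real (i + 1)) - T N lam (i + 2)) + real (N - i) * real a * S N lam (i + 1)
        = - real a / (lam * real i) - T N lam (i + 1)"
    proof -
      have "T N lam (i + 1) = 1 / (lam * real (i + 1)) + T N lam (i + 2)"
        using T_split[of "i+1" N lam] lt by simp
      moreover have "real N - real i \<noteq> 0" "real (N - i) = real N - real i" using lt by auto
      ultimately show ?thesis using lam by (cases "i = 0") (simp_all add: field_simps)
    qed
    ultimately show ?thesis using v by simp
  qed
qed

lemma little_o:
  fixes f :: "real \<Rightarrow> real"
  assumes d: "DERIV f 0 :> - E"
  shows "(\<lambda>p. f p - (f 0 - E * p)) \<in> o[at_right 0](\<lambda>p. p)"
proof (rule smalloI_tendsto)
  have "((\<lambda>y. (f y - f 0) / (y - 0)) \<longlongrightarrow> - E) (at 0)"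
    using d by (simp only: has_field_derivative_iff)
  then have l0: "((\<lambda>y. (f y - f 0) / y) \<longlongrightarrow> - E) (at 0)" by simp
  have "((\<lambda>y. (f y - f 0) / y) \<longlongrightarrow> - E) (at_right 0)"
    by (rule tendsto_mono[OF _ l0]) (rule at_le, simp)
  then have "((\<lambda>y. (f y - f 0) / y + E) \<longlongrightarrow> - E + E) (at_right 0)"
    by (intro tendsto_add) auto
  then have l: "((\<lambda>y. (f y - f 0) / y + E) \<longlongrightarrow> 0) (at_right 0)" by simp
  have ev: "eventually (\<lambda>y. (f y - f 0) / y + E = (f y - (f 0 - E * y)) / y) (at_right (0::real))"
    by (rule eventually_at_rightI[of 0 1]) (auto simp: field_simps)
  show "((\<lambda>p. (f p - (f 0 - E * p)) / p) \<longlongrightarrow> 0) (at_right 0)"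
    by (rule Lim_transform_eventually[OF l ev])
  show "eventually (\<lambda>p::real. p \<noteq> 0) (at_right 0)"
    by (rule eventually_at_rightI[of 0 1]) auto
qed

lemma harm_id:
  assumes "N \<ge> 3" "lam > 0"
  shows "(\<Sum>i = 1..N - 1. 1 / (lam * real i * real (N - i))) = 2 / (lam * real N) * harm (N - 1)"
proof -
  have e: "1 / (lam * real i * real (N - i)) = (1 / real i + 1 / real (N - i)) / (lam * real N)"
    if "i \<in> {1..N-1}" for i
    using that assms by (auto simp: field_simps of_nat_diff)
  have r: "(\<Sum>i = 1..N - 1. 1 / real (N - i)) = (\<Sum>i = 1..N - 1. 1 / real i)"
  proof -
    have "(\<Sum>i = 1..N - 1. 1 / real i) = (\<Sum>i = 1..N - 1. 1 / real (N - 1 + 1 - i))"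
      by (rule sum.atLeastAtMost_rev)
    also have "\<dots> = (\<Sum>i = 1..N - 1. 1 / real (N - i))"
      using assms by (intro sum.cong) auto
    finally show ?thesis by simp
  qed
  have "(\<Sum>i = 1..N - 1. 1 / (lam * real i * real (N - i)))
      = (\<Sum>i = 1..N - 1. (1 / real i + 1 / real (N - i))) / (lam * real N)"
    by (simp add: e sum_divide_distrib)
  also have "\<dots> = 2 * (\<Sum>i = 1..N - 1. 1 / real i) / (lam * real N)"
    unfolding sum.distrib r by simp
  also have "\<dots> = 2 / (lam * real N) * harm (N - 1)"
    by (simp add: harm_def divide_inverse)
  finally show ?thesis .
qed

theorem lemma1:
  fixes N :: nat and lam :: real
  assumes "N \<ge> 3" and "lam > 0"
  shows "F1 N lam 0 = (\<Sum>i = 1..N - 1. 1 / (lam * real i * real (N - i)))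
       \<and> (\<Sum>i = 1..N - 1. 1 / (lam * real i * real (N - i))) = 2 / (lam * real N) * harm (N - 1)
       \<and> (\<lambda>p. F1 N lam p - (F1 N lam 0 - harm (N - 1) / lam * p)) \<in> o[at_right 0](\<lambda>p. p)"
proof -
  have N2: "N \<ge> 2" using assms by simp
  have m2: "Fa N lam 0 1 2 = S N lam 2"
   and d2: "DERIV (\<lambda>p. Fa N lam p 1 2) 0 :> (- 1 / (lam * 2) - T N lam 3)"
    using main[OF N2 assms(2), of 2 1] assms by auto
  have F0: "F1 N lam 0 = 1 / (lam * real (N - 1)) + S N lam 2"
    unfolding F1_def using m2 by simp (rule sum.neutral, auto)
  have S1: "S N lam 1 = 1 / (lam * real (N - 1)) + S N lam 2"
    using S_split[of 1 N lam] assms by (simp add: numeral_2_eq_2)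
  have p1: "F1 N lam 0 = (\<Sum>i = 1..N - 1. 1 / (lam * real i * real (N - i)))"
    using F0 S1 by (simp add: S_def)
  have dfirst: "DERIV (\<lambda>p. (1 - p) ^ (N - 1) * (1 / (lam * real (N - 1)) + Fa N lam p 1 2)) 0
       :> (- real (N - 1) * (1 / (lam * real (N - 1)) + S N lam 2) + (- 1 / (lam * 2) - T N lam 3))"
    using DERIV_mult[OF D_omp DERIV_add[OF DERIV_const d2], of "N - 1" "1 / (lam * real (N - 1))"] m2
    by simp
  have dc: "DERIV (\<lambda>p. real ((N - 1) choose c) * p ^ c * (1 - p) ^ (N - 1 - c) * Fa N lam p c (1 + c)) 0 :>
             (if c = 1 then real (N - 1) * S N lam 2 else 0)"
    if c: "c \<in> {1..N - 2}" for c
  proof -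
    have ic: "1 + c \<le> N - 1" using c by auto
    obtain D where dF: "DERIV (\<lambda>p. Fa N lam p c (1 + c)) 0 :> D" using main[OF N2 assms(2) ic] by blast
    have vF: "Fa N lam 0 c (1 + c) = S N lam (1 + c)" using main[OF N2 assms(2) ic] by blast
    have dA: "DERIV (\<lambda>p::real. p ^ c) 0 :> (if c = 1 then 1 else 0)"
      by (rule D_powc[OF DERIV_ident]) (use c in auto)
    have "DERIV (\<lambda>p. real ((N - 1) choose c) * p ^ c * (1 - p) ^ (N - 1 - c) * Fa N lam p c (1 + c)) 0 :>
          (real ((N - 1) choose c) * (if c = 1 then 1 else 0) * (1 - 0) ^ (N - 1 - c)
            + - real (N - 1 - c) * (real ((N - 1) choose c) * 0 ^ c)) * Fa N lam 0 c (1 + c)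
           + D * (real ((N - 1) choose c) * 0 ^ c * (1 - 0) ^ (N - 1 - c))"
      by (intro DERIV_mult DERIV_cmult dA D_omp dF)
    moreover have "(real ((N - 1) choose c) * (if c = 1 then 1 else 0) * (1 - 0) ^ (N - 1 - c)
            + - real (N - 1 - c) * (real ((N - 1) choose c) * 0 ^ c)) * Fa N lam 0 c (1 + c)
           + D * (real ((N - 1) choose c) * 0 ^ c * (1 - 0) ^ (N - 1 - c))
         = (if c = 1 then real (N - 1) * S N lam 2 else 0)"
      using c vF by (auto simp: numeral_2_eq_2)
    ultimately show ?thesis by simp
  qed
  have dsum: "DERIV (\<lambda>p. \<Sum>c = 1..N - 2. real ((N - 1) choose c) * p ^ c * (1 - p) ^ (N - 1 - c) * Fa N lam p c (1 + c)) 0 :>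
        (\<Sum>c = 1..N - 2. (if c = 1 then real (N - 1) * S N lam 2 else 0))"
    by (rule DERIV_sum) (rule dc)
  have sv: "(\<Sum>c = 1..N - 2. (if c = 1 then real (N - 1) * S N lam 2 else 0)) = real (N - 1) * S N lam 2"
    using assms by (simp add: sum.delta)
  have dF1: "DERIV (\<lambda>p. F1 N lam p) 0 :>
     (- real (N - 1) * (1 / (lam * real (N - 1)) + S N lam 2) + (- 1 / (lam * 2) - T N lam 3) + real (N - 1) * S N lam 2)"
    unfolding F1_def using DERIV_add[OF dfirst dsum] sv by simp
  have T2: "T N lam 2 = 1 / (lam * 2) + T N lam 3" using T_split[of 2 N lam] assms by simp
  have T1: "T N lam 1 = 1 / lam + T N lam 2" using T_split[of 1 N lam] assms by (simp add: numeral_2_eq_2)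
  have TH: "T N lam 1 = harm (N - 1) / lam"
    unfolding T_def harm_def sum_divide_distrib by (rule sum.cong) (auto simp: field_simps)
  have "- real (N - 1) * (1 / (lam * real (N - 1)) + S N lam 2) + (- 1 / (lam * 2) - T N lam 3) + real (N - 1) * S N lam 2
      = - (harm (N - 1) / lam)"
  proof -
    have g: "\<And>x s t. x \<noteq> 0 \<Longrightarrow> - x * (1 / (lam * x) + s) + (- 1 / (lam * 2) - t) + x * s
        = - (1 / lam + (1 / (lam * 2) + t))"
      using assms by (simp add: field_simps)
    have "real (N - 1) \<noteq> 0" using assms by simp
    note e = g[OF this, of "S N lam 2" "T N lam 3"]
    have h: "1 / lam + (1 / (lam * 2) + T N lam 3) = harm (N - 1) / lam"
      using T2 T1 TH by linarith
    show ?thesis using e h by linarith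
  qed
  with dF1 have "DERIV (\<lambda>p. F1 N lam p) 0 :> - (harm (N - 1) / lam)" by simp
  from little_o[OF this] have p3: "(\<lambda>p. F1 N lam p - (F1 N lam 0 - harm (N - 1) / lam * p)) \<in> o[at_right 0](\<lambda>p. p)" .
  show ?thesis using p1 p3 harm_id[OF assms] by simp
qed

end
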